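(* Let $1\le r\le s\le t$ and let $u=ABCd$, $v=A'B'C'd'$ be vertices of $E3C(r,s,t)$ with $A\ne A'$, $B\ne B'$, $C=C'$ and $d=d'$. Then there exist $2r+2$ pairwise internally disjoint $u$–$v$ paths in $E3C(r,s,t)$, each of length at most $r+s+5$ if $d=0$, and each of length at most $r+s+7$ if $d\in\{1,2\}$.
   Context: The exchanged 3-ary $n$-cube $E3C(r,s,t)$ ($r,s,t\ge1$, $n=r+s+t+1$): vertices are strings written $x=ABCd$ with $A\in\{0,1,2\}^r$, $B\in\{0,1,2\}^s$, $C\in\{0,1,2\}^t$, $d\in\{0,1,2\}$. Two distinct vertices $x=ABCd$, $y=A'B'C'd'$ are adjacent iff one of: (E0) $A=A',B=B',C=C'$ and $d\ne d'$; (E1) $d=d'=0$, $A=A'$, $B=B'$ and $C,C'$ differ in exactly one position; (E2) $d=d'=1$, $A=A'$, $C=C'$ and $B,B'$ differ in exactly one position; (E3) $d=d'=2$, $B=B'$, $C=C'$ and $A,A'$ differ in exactly one position. Paths are internally disjoint if they share no vertices other than their endpoints; length = number of edges. *)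

theory Defs
  imports Main
begin

text \<open>A vertex ABCd of E3C(r,s,t) is a quadruple (A,B,C,d) with A,B,C words over {0,1,2}
  (lists of naturals < 3) of lengths r,s,t and d \<in> {0,1,2}.\<close>

type_synonym vtx = "nat list \<times> nat list \<times> nat list \<times> nat"

definition word3 :: "nat \<Rightarrow> nat list \<Rightarrow> bool" where
  "word3 n X \<longleftrightarrow> length X = n \<and> (\<forall>a\<in>set X. a < 3)"

definition e3c_vert :: "nat \<Rightarrow> nat \<Rightarrow> nat \<Rightarrow> vtx \<Rightarrow> bool" where
  "e3c_vert r s t x = (case x of (A, B, C, d) \<Rightarrow>
     word3 r A \<and> word3 s B \<and> word3 t C \<and> d < 3)"

definition differ1 :: "nat list \<Rightarrow> nat list \<Rightarrow> bool" where
  "differ1 X Y \<longleftrightarrow> length X = length Y \<and> card {i. i < length X \<and> X ! i \<noteq> Y ! i} = 1"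

definition e3c_adj :: "nat \<Rightarrow> nat \<Rightarrow> nat \<Rightarrow> vtx \<Rightarrow> vtx \<Rightarrow> bool" where
  "e3c_adj r s t x y = (case x of (A, B, C, d) \<Rightarrow> case y of (A', B', C', d') \<Rightarrow>
     e3c_vert r s t x \<and> e3c_vert r s t y \<and> x \<noteq> y \<and>
     ((A = A' \<and> B = B' \<and> C = C' \<and> d \<noteq> d') \<or>
      (d = 0 \<and> d' = 0 \<and> A = A' \<and> B = B' \<and> differ1 C C') \<or>
      (d = 1 \<and> d' = 1 \<and> A = A' \<and> C = C' \<and> differ1 B B') \<or>
      (d = 2 \<and> d' = 2 \<and> B = B' \<and> C = C' \<and> differ1 A A')))"

text \<open>A u-v path is a nonempty list of distinct vertices starting at u, ending at v,
  with consecutive entries adjacent. Its length is the number of edges, length p - 1.\<close>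
definition e3c_path :: "nat \<Rightarrow> nat \<Rightarrow> nat \<Rightarrow> vtx \<Rightarrow> vtx \<Rightarrow> vtx list \<Rightarrow> bool" where
  "e3c_path r s t u v p \<longleftrightarrow> p \<noteq> [] \<and> hd p = u \<and> last p = v \<and> distinct p \<and>
     (\<forall>x\<in>set p. e3c_vert r s t x) \<and>
     (\<forall>i. Suc i < length p \<longrightarrow> e3c_adj r s t (p ! i) (p ! Suc i))"

definition internally_disjoint :: "vtx \<Rightarrow> vtx \<Rightarrow> vtx list list \<Rightarrow> bool" where
  "internally_disjoint u v ps \<longleftrightarrow> distinct ps \<and>
     (\<forall>i j. i < length ps \<longrightarrow> j < length ps \<longrightarrow> i \<noteq> j \<longrightarrow>
        set (ps ! i) \<inter> set (ps ! j) \<subseteq> {u, v})"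

end

theory Submission
  imports Defs
begin

definition ham :: "nat list \<Rightarrow> nat list \<Rightarrow> nat" where
  "ham X Y = card {i. i < length X \<and> X ! i \<noteq> Y ! i}"

lemma diffset_Cons:
  "{i. i < length (x#xs) \<and> (x#xs)!i \<noteq> (y#ys)!i} =
   (if x = y then {} else {0}) \<union> Suc ` {i. i < length xs \<and> xs!i \<noteq> ys!i}"
proof (rule set_eqI)
  fix i
  show "i \<in> {i. i < length (x#xs) \<and> (x#xs)!i \<noteq> (y#ys)!i} \<longleftrightarrow>
      i \<in> (if x = y then {} else {0}) \<union> Suc ` {i. i < length xs \<and> xs!i \<noteq> ys!i}"
  proof (cases i)
    case 0 then show ?thesis by auto
  next
    case (Suc j) then show ?thesis by auto
  qed
qed

lemma ham_Cons: "ham (x#xs) (y#ys) = (if x = y then 0 else 1) + ham xs ys"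
proof -
  have "card ((if x = y then {} else {0}) \<union> Suc ` {i. i < length xs \<and> xs!i \<noteq> ys!i})
     = card (if x = y then {} else {0::nat}) + card (Suc ` {i. i < length xs \<and> xs!i \<noteq> ys!i})"
    by (rule card_Un_disjoint) auto
  also have "card (Suc ` {i. i < length xs \<and> xs!i \<noteq> ys!i}) = ham xs ys"
    unfolding ham_def by (simp add: card_image)
  finally show ?thesis unfolding ham_def diffset_Cons by simp
qed

lemma ham_Nil: "ham [] ys = 0" by (simp add: ham_def)

lemma ham_le: "ham X Y \<le> length X"
proof -
  have "{i. i < length X \<and> X ! i \<noteq> Y ! i} \<subseteq> {..<length X}" by auto
  then show ?thesis unfolding ham_def by (metis card_lessThan card_mono finite_lessThan)
qed

lemma ham_same[simp]: "ham X X = 0" by (simp add: ham_def)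

lemma ham_sym: "length X = length Y \<Longrightarrow> ham X Y = ham Y X" unfolding ham_def by metis

lemma differ1_ham: "differ1 X Y \<longleftrightarrow> length X = length Y \<and> ham X Y = 1"
  by (simp add: differ1_def ham_def)

lemma differ1_sym: "differ1 X Y \<Longrightarrow> differ1 Y X"
  using ham_sym by (auto simp: differ1_ham)

lemma differ1_Cons_same[simp]: "differ1 (c#X) (c#Y) \<longleftrightarrow> differ1 X Y"
  by (simp add: differ1_ham ham_Cons)

lemma differ1_neq: "differ1 X Y \<Longrightarrow> X \<noteq> Y"
  by (auto simp: differ1_ham)

lemma differ1_upd: "i < length X \<Longrightarrow> a \<noteq> X!i \<Longrightarrow> differ1 X (X[i:=a])"
proof -
  assume a: "i < length X" "a \<noteq> X!i"
  have "{j. j < length X \<and> X ! j \<noteq> X[i:=a] ! j} = {i}" using a by (auto simp: nth_list_update)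
  then show ?thesis by (simp add: differ1_def)
qed

fun wk :: "nat list \<Rightarrow> nat list \<Rightarrow> nat list list" where
  "wk [] _ = [[]]"
| "wk (x#xs) [] = [x#xs]"
| "wk (x#xs) (y#ys) = (if x = y then map ((#) x) (wk xs ys) else (x#xs) # map ((#) y) (wk xs ys))"

lemma wk_ne[simp]: "wk xs ys \<noteq> []"
  by (induction xs ys rule: wk.induct) auto

lemma wk_hd[simp]: "hd (wk xs ys) = xs"
  by (induction xs ys rule: wk.induct) (auto simp: hd_map)

lemma wk_last: "length xs = length ys \<Longrightarrow> last (wk xs ys) = ys"
  by (induction xs ys rule: wk.induct) (auto simp: last_map)

lemma wk_len: "length xs = length ys \<Longrightarrow> length (wk xs ys) = ham xs ys + 1"
  by (induction xs ys rule: wk.induct) (auto simp: ham_Cons ham_Nil)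

lemma wk_set: "length xs = length ys \<Longrightarrow> z \<in> set (wk xs ys) \<Longrightarrow>
   length z = length xs \<and> (\<forall>i<length xs. z!i = xs!i \<or> z!i = ys!i)"
proof (induction xs ys arbitrary: z rule: wk.induct)
  case (3 x xs y ys)
  then have l: "length xs = length ys" by simp
  show ?case
  proof (cases "x = y")
    case True
    with 3(4) obtain w where w: "w \<in> set (wk xs ys)" "z = x # w" by auto
    from "3.IH"(1)[OF True l w(1)] w(2) True show ?thesis by (auto simp: nth_Cons split: nat.splits)
  next
    case False
    with 3(4) consider "z = x#xs" | w where "w \<in> set (wk xs ys)" "z = y # w" by auto
    then show ?thesis
    proof cases
      case 1 then show ?thesis using l by simp
    next
      case 2
      from "3.IH"(2)[OF False l 2(1)] 2(2) show ?thesis by (auto simp: nth_Cons split: nat.splits)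
    qed
  qed
qed auto

lemma wk_distinct: "distinct (wk xs ys)"
proof (induction xs ys rule: wk.induct)
  case (3 x xs y ys)
  then show ?case by (auto simp: distinct_map inj_on_def)
qed auto

lemma wk_word3: "word3 n xs \<Longrightarrow> word3 n ys \<Longrightarrow> z \<in> set (wk xs ys) \<Longrightarrow> word3 n z"
proof -
  assume a: "word3 n xs" "word3 n ys" "z \<in> set (wk xs ys)"
  then have l: "length xs = length ys" by (simp add: word3_def)
  from wk_set[OF l a(3)] a show ?thesis
    unfolding word3_def by (metis in_set_conv_nth)
qed

fun chain :: "('a \<Rightarrow> 'a \<Rightarrow> bool) \<Rightarrow> 'a list \<Rightarrow> bool" where
  "chain R (a#b#xs) = (R a b \<and> chain R (b#xs))"
| "chain R _ = True"

lemma chain_conv: "chain R xs \<longleftrightarrow> (\<forall>i. Suc i < length xs \<longrightarrow> R (xs!i) (xs!Suc i))"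
proof (induction R xs rule: chain.induct)
  case (1 R a b xs)
  show ?case
    apply (simp add: 1)
    apply (auto simp: nth_Cons split: nat.splits)
    done
qed auto

lemma chain_Cons: "chain R (x # ys) \<longleftrightarrow> chain R ys \<and> (ys \<noteq> [] \<longrightarrow> R x (hd ys))"
  by (cases ys) auto

lemma chain_append: "chain R (xs @ ys) \<longleftrightarrow> chain R xs \<and> chain R ys \<and> (xs \<noteq> [] \<longrightarrow> ys \<noteq> [] \<longrightarrow> R (last xs) (hd ys))"
  by (induction xs) (auto simp: chain_Cons)

lemma chain_map: "chain R (map f xs) \<longleftrightarrow> chain (\<lambda>a b. R (f a) (f b)) xs"
  by (induction "\<lambda>a b. R (f a) (f b)" xs rule: chain.induct) auto

lemma chain_mono: "chain R xs \<Longrightarrow> (\<And>a b. a \<in> set xs \<Longrightarrow> b \<in> set xs \<Longrightarrow> R a b \<Longrightarrow> R' a b) \<Longrightarrow> chain R' xs"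
  by (induction R xs rule: chain.induct) auto

lemma wk_chain: "length xs = length ys \<Longrightarrow> chain differ1 (wk xs ys)"
proof (induction xs ys rule: wk.induct)
  case (3 x xs y ys)
  then have c: "chain differ1 (wk xs ys)" by (cases "x = y") auto
  have c': "chain differ1 (map ((#) c) (wk xs ys))" for c
    using c by (simp add: chain_map)
  show ?case
  proof (cases "x = y")
    case True then show ?thesis using c' by simp
  next
    case False
    have "differ1 (x#xs) (y#xs)" by (simp add: differ1_ham ham_Cons False)
    then show ?thesis using c' False by (simp add: chain_Cons hd_map)
  qed
qed auto

definition gvalid :: "nat \<Rightarrow> nat \<Rightarrow> nat \<Rightarrow> vtx \<Rightarrow> bool" where
  "gvalid m n t w = (case w of (x,y,z,L) \<Rightarrow> word3 m x \<and> word3 n y \<and> word3 t z \<and> L < 3)"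

definition gadj :: "vtx \<Rightarrow> vtx \<Rightarrow> bool" where
  "gadj w w' = (case w of (x,y,z,L) \<Rightarrow> case w' of (x',y',z',L') \<Rightarrow>
     (x = x' \<and> y = y' \<and> z = z' \<and> L \<noteq> L') \<or>
     (L = 2 \<and> L' = 2 \<and> y = y' \<and> z = z' \<and> differ1 x x') \<or>
     (L = 1 \<and> L' = 1 \<and> x = x' \<and> z = z' \<and> differ1 y y') \<or>
     (L = 0 \<and> L' = 0 \<and> x = x' \<and> y = y' \<and> differ1 z z'))"

definition gpath :: "nat \<Rightarrow> nat \<Rightarrow> nat \<Rightarrow> vtx \<Rightarrow> vtx \<Rightarrow> vtx list \<Rightarrow> bool" where
  "gpath m n t u v p \<longleftrightarrow> p \<noteq> [] \<and> hd p = u \<and> last p = v \<and> distinct p \<and>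
     (\<forall>w\<in>set p. gvalid m n t w) \<and> chain gadj p"

definition swL :: "nat \<Rightarrow> nat" where "swL L = (if L = 1 then 2 else if L = 2 then 1 else L)"

definition gv :: "bool \<Rightarrow> vtx \<Rightarrow> vtx" where
  "gv sw w = (case w of (x,y,z,L) \<Rightarrow> if sw then (y,x,z,swL L) else (x,y,z,L))"

lemma gv_inj: "inj (gv sw)"
  by (auto simp: inj_def gv_def swL_def split: if_splits)

lemma gv_valid:
  assumes "if sw then m = s \<and> n = r else m = r \<and> n = s" "gvalid m n t w"
  shows "e3c_vert r s t (gv sw w)"
  using assms by (cases w) (auto simp: gvalid_def gv_def e3c_vert_def swL_def split: if_splits)

lemma gv_adj:
  assumes "if sw then m = s \<and> n = r else m = r \<and> n = s" "gvalid m n t w" "gvalid m n t w'" "gadj w w'"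
  shows "e3c_adj r s t (gv sw w) (gv sw w')"
proof -
  obtain x y z L where w: "w = (x,y,z,L)" by (cases w) auto
  obtain x' y' z' L' where w': "w' = (x',y',z',L')" by (cases w') auto
  have v1: "e3c_vert r s t (gv sw w)" and v2: "e3c_vert r s t (gv sw w')" using gv_valid assms by auto
  have ne: "gv sw w \<noteq> gv sw w'"
    using assms(4) differ1_neq unfolding w w' gadj_def by (auto simp: gv_def swL_def split: if_splits)
  show ?thesis using v1 v2 ne assms(4) unfolding w w'
    by (auto simp: e3c_adj_def gadj_def gv_def swL_def gvalid_def split: if_splits)
qed

lemma gpath_transfer:
  assumes "if sw then m = s \<and> n = r else m = r \<and> n = s" "gpath m n t u v p"
  shows "e3c_path r s t (gv sw u) (gv sw v) (map (gv sw) p)"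
proof -
  have c: "chain gadj p" and val: "\<forall>w\<in>set p. gvalid m n t w" using assms(2) by (auto simp: gpath_def)
  have "chain (e3c_adj r s t) (map (gv sw) p)"
    unfolding chain_map by (rule chain_mono[OF c]) (use gv_adj[OF assms(1)] val in auto)
  then show ?thesis using assms(2) gv_valid[OF assms(1)] gv_inj
    by (auto simp: e3c_path_def gpath_def chain_conv hd_map last_map distinct_map inj_on_def
        simp del: chain.simps)
qed

lemma chain_L0: "length a = length b \<Longrightarrow> chain gadj (map (\<lambda>z. (x,y,z,0::nat)) (wk a b))"
  unfolding chain_map by (rule chain_mono[OF wk_chain]) (auto simp: gadj_def)
lemma chain_L1: "length a = length b \<Longrightarrow> chain gadj (map (\<lambda>y. (x,y,z,1::nat)) (wk a b))"
  unfolding chain_map by (rule chain_mono[OF wk_chain]) (auto simp: gadj_def)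
lemma chain_L2: "length a = length b \<Longrightarrow> chain gadj (map (\<lambda>x. (x,y,z,2::nat)) (wk a b))"
  unfolding chain_map by (rule chain_mono[OF wk_chain]) (auto simp: gadj_def)

definition NP :: "nat list \<Rightarrow> nat list \<Rightarrow> nat list \<Rightarrow> nat list \<Rightarrow> nat list \<Rightarrow> nat list \<Rightarrow> nat list \<Rightarrow> nat list \<Rightarrow> vtx list" where
  "NP X Y Z X' Y' s t M = [(X,Y,Z,2)] @ (if s = X then [] else [(s,Y,Z,2)]) @
     map (\<lambda>y. (s,y,Z,1)) (wk Y M) @ map (\<lambda>x. (x,M,Z,2)) (wk s t) @
     map (\<lambda>y. (t,y,Z,1)) (wk M Y') @ (if t = X' then [] else [(t,Y',Z,2)]) @ [(X',Y',Z,2)]"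

lemma NP_path:
  assumes w: "word3 m X" "word3 m X'" "word3 m s" "word3 m t" "word3 n Y" "word3 n Y'" "word3 n M" "word3 k Z"
    and ne: "Y \<noteq> Y'" "M \<noteq> Y" "M \<noteq> Y'" "s \<noteq> t"
    and ad: "s = X \<or> differ1 X s" "t = X' \<or> differ1 t X'"
  shows "gpath m n k (X,Y,Z,2) (X',Y',Z,2) (NP X Y Z X' Y' s t M)"
    and "length (NP X Y Z X' Y' s t M) - 1 = ham Y M + ham s t + ham M Y' + 4 + (if s = X then 0 else 1) + (if t = X' then 0 else 1)"
    and "set (NP X Y Z X' Y' s t M) \<subseteq> {(X,Y,Z,2), (X',Y',Z,2), (s,Y,Z,2), (t,Y',Z,2)} \<union>
          {w. \<exists>y. w = (s,y,Z,1) \<or> w = (t,y,Z,1)} \<union> {w. \<exists>x\<in>set (wk s t). w = (x,M,Z,2)}"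
proof -
  have l: "length Y = length M" "length s = length t" "length M = length Y'"
    using w by (auto simp: word3_def)
  note wl = wk_last[OF l(1)] wk_last[OF l(2)] wk_last[OF l(3)]
  have dist: "distinct (NP X Y Z X' Y' s t M)"
    unfolding NP_def distinct_append
    apply (intro conjI)
    using ne by (auto simp: distinct_map wk_distinct inj_on_def)
  have a: "\<forall>y\<in>set (wk Y M). word3 n y" "\<forall>y\<in>set (wk s t). word3 m y" "\<forall>y\<in>set (wk M Y'). word3 n y"
    using wk_word3 w by blast+
  have val: "\<forall>w\<in>set (NP X Y Z X' Y' s t M). gvalid m n k w"
    using w a by (auto simp: NP_def gvalid_def)
  note c = chain_L1[OF l(1)] chain_L2[OF l(2)] chain_L1[OF l(3)]
  have ch: "chain gadj (NP X Y Z X' Y' s t M)"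
    unfolding NP_def chain_append
    using ad c by (simp add: hd_map last_map wl gadj_def differ1_sym) blast
  show "gpath m n k (X,Y,Z,2) (X',Y',Z,2) (NP X Y Z X' Y' s t M)"
    using dist val ch by (simp add: gpath_def NP_def)
  show "length (NP X Y Z X' Y' s t M) - 1 = ham Y M + ham s t + ham M Y' + 4 + (if s = X then 0 else 1) + (if t = X' then 0 else 1)"
    using l by (cases "s = X"; cases "t = X'") (simp_all add: NP_def wk_len)
  show "set (NP X Y Z X' Y' s t M) \<subseteq> {(X,Y,Z,2), (X',Y',Z,2), (s,Y,Z,2), (t,Y',Z,2)} \<union>
          {w. \<exists>y. w = (s,y,Z,1) \<or> w = (t,y,Z,1)} \<union> {w. \<exists>x\<in>set (wk s t). w = (x,M,Z,2)}"
    by (auto simp: NP_def)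
qed

definition DP :: "nat list \<Rightarrow> nat list \<Rightarrow> nat list \<Rightarrow> nat list \<Rightarrow> nat list \<Rightarrow> nat list \<Rightarrow> vtx list" where
  "DP X Y Z X' Y' s = [(X,Y,Z,2)] @ (if s = X then [] else [(s,Y,Z,2)]) @
     map (\<lambda>y. (s,y,Z,1)) (wk Y Y') @ (if s = X' then [] else [(s,Y',Z,2)]) @ [(X',Y',Z,2)]"

lemma DP_path:
  assumes w: "word3 m X" "word3 m X'" "word3 m s" "word3 n Y" "word3 n Y'" "word3 k Z"
    and ne: "Y \<noteq> Y'" "X \<noteq> X'"
    and ad: "s = X \<or> differ1 X s" "s = X' \<or> differ1 s X'"
  shows "gpath m n k (X,Y,Z,2) (X',Y',Z,2) (DP X Y Z X' Y' s)"
    and "length (DP X Y Z X' Y' s) - 1 \<le> n + 4"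
    and "set (DP X Y Z X' Y' s) \<subseteq> {(X,Y,Z,2), (X',Y',Z,2), (s,Y,Z,2), (s,Y',Z,2)} \<union>
          {w. \<exists>y. w = (s,y,Z,1)}"
proof -
  have l: "length Y = length Y'" "length Y = n"
    using w by (auto simp: word3_def)
  note wl = wk_last[OF l(1)]
  have dist: "distinct (DP X Y Z X' Y' s)"
    unfolding DP_def distinct_append
    apply (intro conjI)
    using ne by (auto simp: distinct_map wk_distinct inj_on_def)
  have a: "\<forall>y\<in>set (wk Y Y'). word3 n y"
    using wk_word3 w by blast+
  have val: "\<forall>w\<in>set (DP X Y Z X' Y' s). gvalid m n k w"
    using w a by (auto simp: DP_def gvalid_def)
  note c = chain_L1[OF l(1)]
  have ch: "chain gadj (DP X Y Z X' Y' s)"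
    unfolding DP_def chain_append
    using ad ne c by (simp add: hd_map last_map wl gadj_def differ1_sym) blast
  show "gpath m n k (X,Y,Z,2) (X',Y',Z,2) (DP X Y Z X' Y' s)"
    using dist val ch by (simp add: gpath_def DP_def)
  show "length (DP X Y Z X' Y' s) - 1 \<le> n + 4"
    using l ham_le[of Y Y'] by (simp add: DP_def wk_len)
  show "set (DP X Y Z X' Y' s) \<subseteq> {(X,Y,Z,2), (X',Y',Z,2), (s,Y,Z,2), (s,Y',Z,2)} \<union>
          {w. \<exists>y. w = (s,y,Z,1)}"
    by (auto simp: DP_def)
qed

definition QZ :: "nat list \<Rightarrow> nat list \<Rightarrow> nat list \<Rightarrow> nat list \<Rightarrow> nat list \<Rightarrow> nat list \<Rightarrow> vtx list" where
  "QZ X Y Z X' Y' Zm = [(X,Y,Z,2),(X,Y,Z,0),(X,Y,Zm,0)] @ map (\<lambda>y. (X,y,Zm,1)) (wk Y Y') @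
     map (\<lambda>x. (x,Y',Zm,2)) (wk X X') @ [(X',Y',Zm,0),(X',Y',Z,0),(X',Y',Z,2)]"

lemma QZ_path:
  assumes w: "word3 m X" "word3 m X'" "word3 n Y" "word3 n Y'" "word3 k Z" "word3 k Zm"
    and ne: "Y \<noteq> Y'" "X \<noteq> X'" and d: "differ1 Z Zm"
  shows "gpath m n k (X,Y,Z,2) (X',Y',Z,2) (QZ X Y Z X' Y' Zm)"
    and "length (QZ X Y Z X' Y' Zm) - 1 \<le> m + n + 7"
    and "set (QZ X Y Z X' Y' Zm) \<subseteq> {(X,Y,Z,2), (X',Y',Z,2), (X,Y,Z,0), (X',Y',Z,0)} \<union>
          {w. \<exists>x y L. w = (x,y,Zm,L)}"
proof -
  have l: "length Y = length Y'" "length X = length X'" "length Y = n" "length X = m"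
    using w by (auto simp: word3_def)
  note wl = wk_last[OF l(1)] wk_last[OF l(2)]
  have zne: "Z \<noteq> Zm" using d differ1_neq by auto
  have dist: "distinct (QZ X Y Z X' Y' Zm)"
    unfolding QZ_def distinct_append
    apply (intro conjI)
    using ne zne by (auto simp: distinct_map wk_distinct inj_on_def)
  have a: "\<forall>y\<in>set (wk Y Y'). word3 n y" "\<forall>y\<in>set (wk X X'). word3 m y"
    using wk_word3 w by blast+
  have val: "\<forall>w\<in>set (QZ X Y Z X' Y' Zm). gvalid m n k w"
    using w a by (auto simp: QZ_def gvalid_def)
  note c = chain_L1[OF l(1)] chain_L2[OF l(2)]
  have ch: "chain gadj (QZ X Y Z X' Y' Zm)"
    unfolding QZ_def chain_append
    using d c by (simp add: hd_map last_map wl gadj_def differ1_sym)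
  show "gpath m n k (X,Y,Z,2) (X',Y',Z,2) (QZ X Y Z X' Y' Zm)"
    using dist val ch by (simp add: gpath_def QZ_def)
  show "length (QZ X Y Z X' Y' Zm) - 1 \<le> m + n + 7"
    using l ham_le[of Y Y'] ham_le[of X X'] by (simp add: QZ_def wk_len)
  show "set (QZ X Y Z X' Y' Zm) \<subseteq> {(X,Y,Z,2), (X',Y',Z,2), (X,Y,Z,0), (X',Y',Z,0)} \<union>
          {w. \<exists>x y L. w = (x,y,Zm,L)}"
    by (auto simp: QZ_def)
qed

lemma wk_len_pos[simp]: "0 < length (wk a b)"
  using wk_ne[of a b] by (simp del: wk_ne)

definition inn :: "nat list \<Rightarrow> nat list \<Rightarrow> nat list \<Rightarrow> nat list set \<Rightarrow> (nat list \<Rightarrow> nat list) \<Rightarrow> (nat list \<Rightarrow> nat list) \<Rightarrow> nat list \<Rightarrow> vtx \<Rightarrow> bool" where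
  "inn Y Y' Z T \<pi> \<mu> s = (\<lambda>(x,y,z,L). z = Z \<and> ((L = 2 \<and> y = Y \<and> x = s) \<or> (L = 2 \<and> y = Y' \<and> x = \<pi> s) \<or>
      (L = 1 \<and> (x = s \<or> x = \<pi> s)) \<or> (L = 2 \<and> s \<notin> T \<and> y = \<mu> s \<and> x \<in> set (wk s (\<pi> s)))))"

lemma inn_disj:
  assumes ne: "Y \<noteq> Y'" and s: "s1 \<in> S" "s2 \<in> S" "s1 \<noteq> s2"
    and pi: "\<pi> ` S \<subseteq> T" "inj_on \<pi> S" "\<forall>x\<in>S\<inter>T. \<pi> x = x"
    and mu: "\<forall>s\<in>S-T. \<mu> s \<noteq> Y \<and> \<mu> s \<noteq> Y'"
    and dis: "\<forall>s1\<in>S-T. \<forall>s2\<in>S-T. s1 \<noteq> s2 \<longrightarrow> \<mu> s1 \<noteq> \<mu> s2 \<or> set (wk s1 (\<pi> s1)) \<inter> set (wk s2 (\<pi> s2)) = {}"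
    and i: "inn Y Y' Z T \<pi> \<mu> s1 w" "inn Y Y' Z T \<pi> \<mu> s2 w"
  shows False
proof -
  obtain x y z L where w: "w = (x,y,z,L)" by (cases w) auto
  have pinj: "\<pi> a = \<pi> b \<Longrightarrow> a \<in> S \<Longrightarrow> b \<in> S \<Longrightarrow> a = b" for a b using pi(2) by (auto simp: inj_on_def)
  have cross: "a = \<pi> b \<Longrightarrow> a \<in> S \<Longrightarrow> b \<in> S \<Longrightarrow> a = b" for a b
  proof -
    assume h: "a = \<pi> b" "a \<in> S" "b \<in> S"
    then have "a \<in> T" using pi(1) by auto
    then have "\<pi> a = a" using pi(3) h by auto
    then show "a = b" using h pinj by metis
  qed
  have i1: "z = Z \<and> ((L = 2 \<and> y = Y \<and> x = s1) \<or> (L = 2 \<and> y = Y' \<and> x = \<pi> s1) \<or>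
      (L = 1 \<and> (x = s1 \<or> x = \<pi> s1)) \<or> (L = 2 \<and> s1 \<notin> T \<and> y = \<mu> s1 \<and> x \<in> set (wk s1 (\<pi> s1))))"
    using i(1) unfolding w inn_def by simp
  have i2: "z = Z \<and> ((L = 2 \<and> y = Y \<and> x = s2) \<or> (L = 2 \<and> y = Y' \<and> x = \<pi> s2) \<or>
      (L = 1 \<and> (x = s2 \<or> x = \<pi> s2)) \<or> (L = 2 \<and> s2 \<notin> T \<and> y = \<mu> s2 \<and> x \<in> set (wk s2 (\<pi> s2))))"
    using i(2) unfolding w inn_def by simp
  show False
  proof (cases "L = 1")
    case True
    then have "x = s1 \<or> x = \<pi> s1" "x = s2 \<or> x = \<pi> s2" using i1 i2 by auto
    then show False using cross pinj s by metis
  next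
    case False
    note F = False
    show False
    proof (cases "y = Y")
      case True
      then have "x = s1" "x = s2" using i1 i2 F ne mu s by auto
      then show False using s by simp
    next
      case False
      note F2 = False
      show False
      proof (cases "y = Y'")
        case True
        then have "x = \<pi> s1" "x = \<pi> s2" using i1 i2 F F2 ne mu s by auto
        then show False using pinj s by metis
      next
        case False
        then have "s1 \<in> S - T" "y = \<mu> s1" "x \<in> set (wk s1 (\<pi> s1))"
              "s2 \<in> S - T" "y = \<mu> s2" "x \<in> set (wk s2 (\<pi> s2))"
          using i1 i2 F F2 s by auto
        then show False using dis s(3) by blast
      qed
    qed
  qed
qed

lemma GP_sub_NP:
  assumes "s \<notin> T"
  shows "set (NP X Y Z X' Y' s (\<pi> s) (\<mu> s)) \<subseteq> {(X,Y,Z,2), (X',Y',Z,2)} \<union> {w. inn Y Y' Z T \<pi> \<mu> s w}"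
  using assms by (auto simp: NP_def inn_def)

lemma GP_sub_DP:
  assumes "\<pi> s = s"
  shows "set (DP X Y Z X' Y' s) \<subseteq> {(X,Y,Z,2), (X',Y',Z,2)} \<union> {w. inn Y Y' Z T \<pi> \<mu> s w}"
  using assms by (auto simp: DP_def inn_def)

lemma QZ_sub:
  "set (QZ X Y Z X' Y' Zm) \<subseteq> {(X,Y,Z,2), (X',Y',Z,2)} \<union> {w. \<exists>x y z L. w = (x,y,z,L) \<and> (L = 0 \<or> z = Zm)}"
  by (auto simp: QZ_def)

lemma inn_QZ: "inn Y Y' Z T \<pi> \<mu> s w \<Longrightarrow> w = (x,y,z,L) \<Longrightarrow> Z \<noteq> Zm \<Longrightarrow> L = 0 \<or> z = Zm \<Longrightarrow> False"
  by (auto simp: inn_def)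

lemma path_len3: "gpath m n k u v p \<Longrightarrow> length p \<ge> 3 \<Longrightarrow> \<exists>w\<in>set p. w \<notin> {u,v}"
proof -
  assume g: "gpath m n k u v p" and l: "length p \<ge> 3"
  have d: "distinct p" and h: "hd p = u" "last p = v" "p \<noteq> []" using g by (auto simp: gpath_def)
  have l1: "1 < length p" "0 < length p" "length p - 1 < length p" using l by auto
  have e1: "p!0 = u" using h by (simp add: hd_conv_nth)
  have e2: "p!(length p - 1) = v" using h by (simp add: last_conv_nth)
  have n1: "p!1 \<noteq> p!0" using nth_eq_iff_index_eq[OF d l1(1) l1(2)] by simp
  have n2: "p!1 \<noteq> p!(length p - 1)" using nth_eq_iff_index_eq[OF d l1(1) l1(3)] l by simp
  have "p!1 \<in> set p" using l by simp
  then show ?thesis using e1 e2 n1 n2 by blast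
qed

lemma core_abstract:
  fixes m n k r :: nat and X X' Y Y' Z Zm :: "nat list" and S T :: "nat list set"
    and \<pi> \<mu> :: "nat list \<Rightarrow> nat list"
  assumes w: "word3 m X" "word3 m X'" "word3 n Y" "word3 n Y'" "word3 k Z" "word3 k Zm"
    and ne: "X \<noteq> X'" "Y \<noteq> Y'" and dZ: "differ1 Z Zm"
    and S: "finite S" "card S = 2*r+1" "\<forall>s\<in>S. word3 m s \<and> (s = X \<or> differ1 X s)"
    and T: "\<forall>t\<in>T. word3 m t \<and> (t = X' \<or> differ1 t X')"
    and pi: "\<pi> ` S \<subseteq> T" "inj_on \<pi> S" "\<forall>x\<in>S\<inter>T. \<pi> x = x"
    and mu: "\<forall>s\<in>S-T. word3 n (\<mu> s) \<and> \<mu> s \<noteq> Y \<and> \<mu> s \<noteq> Y'"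
    and cost: "\<forall>s\<in>S-T. ham Y (\<mu> s) + ham s (\<pi> s) + ham (\<mu> s) Y' + (if s = X then 0 else 1) + (if \<pi> s = X' then 0 else 1) \<le> m + n + 3"
    and dis: "\<forall>s1\<in>S-T. \<forall>s2\<in>S-T. s1 \<noteq> s2 \<longrightarrow> \<mu> s1 \<noteq> \<mu> s2 \<or> set (wk s1 (\<pi> s1)) \<inter> set (wk s2 (\<pi> s2)) = {}"
  shows "\<exists>ps. length ps = 2*r+2 \<and>
     (\<forall>i j. i < length ps \<longrightarrow> j < length ps \<longrightarrow> i \<noteq> j \<longrightarrow> set (ps!i) \<inter> set (ps!j) \<subseteq> {(X,Y,Z,2), (X',Y',Z,2)}) \<and>
     (\<forall>p\<in>set ps. gpath m n k (X,Y,Z,2) (X',Y',Z,2) p \<and> length p - 1 \<le> m+n+7 \<and> length p \<ge> 3)"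
proof -
  define u where "u = (X,Y,Z,2::nat)"
  define v where "v = (X',Y',Z,2::nat)"
  define GP where "GP s = (if s \<in> T then DP X Y Z X' Y' s else NP X Y Z X' Y' s (\<pi> s) (\<mu> s))" for s
  define Q where "Q = QZ X Y Z X' Y' Zm"
  obtain sl where sl: "set sl = S" "distinct sl" using finite_distinct_list[OF S(1)] by blast
  have lsl: "length sl = 2*r+1" using sl S(2) distinct_card by fastforce
  define ps where "ps = map GP sl @ [Q]"
  have zne: "Z \<noteq> Zm" using dZ differ1_neq by auto
  have GPok: "gpath m n k u v (GP s) \<and> length (GP s) - 1 \<le> m+n+7 \<and> length (GP s) \<ge> 3 \<and>
     set (GP s) \<subseteq> {u,v} \<union> {w. inn Y Y' Z T \<pi> \<mu> s w}" if s: "s \<in> S" for s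
  proof (cases "s \<in> T")
    case True
    then have ps: "\<pi> s = s" using pi(3) s by auto
    have ws: "word3 m s" "s = X \<or> differ1 X s" "s = X' \<or> differ1 s X'" using S(3) T s True by auto
    note D = DP_path[OF w(1,2) ws(1) w(3,4,5) ne(2,1) ws(2,3)]
    have "length (DP X Y Z X' Y' s) \<ge> 3" using ws ne(1) by (simp add: DP_def)
    then show ?thesis using D GP_sub_DP[of \<pi> s X Y Z X' Y' T \<mu>, OF ps] True unfolding GP_def u_def v_def by auto
  next
    case False
    have pT: "\<pi> s \<in> T" using pi(1) s by auto
    have ws: "word3 m s" "s = X \<or> differ1 X s" "word3 m (\<pi> s)" "\<pi> s = X' \<or> differ1 (\<pi> s) X'"
      using S(3) T s pT by auto
    have mus: "word3 n (\<mu> s)" "\<mu> s \<noteq> Y" "\<mu> s \<noteq> Y'" using mu s False by auto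
    have sne: "s \<noteq> \<pi> s" using pT False by auto
    note D = NP_path[OF w(1,2) ws(1,3) w(3,4) mus(1) w(5) ne(2) mus(2,3) sne ws(2,4)]
    have c: "ham Y (\<mu> s) + ham s (\<pi> s) + ham (\<mu> s) Y' + (if s = X then 0 else 1) + (if \<pi> s = X' then 0 else 1) \<le> m + n + 3"
      using cost s False by auto
    have "length (NP X Y Z X' Y' s (\<pi> s) (\<mu> s)) \<ge> 3"
      using wk_len_pos[of Y "\<mu> s"] wk_len_pos[of s "\<pi> s"] wk_len_pos[of "\<mu> s" Y']
      unfolding NP_def length_append length_map by linarith
    then show ?thesis using D(1) D(2) c GP_sub_NP[of s T X Y Z X' Y' \<pi> \<mu>, OF False] False unfolding GP_def u_def v_def by auto
  qed
  have Qok: "gpath m n k u v Q \<and> length Q - 1 \<le> m+n+7 \<and> length Q \<ge> 3 \<and>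
     set Q \<subseteq> {u,v} \<union> {w. \<exists>x y z L. w = (x,y,z,L) \<and> (L = 0 \<or> z = Zm)}"
    using QZ_path[OF w ne(2,1) dZ] QZ_sub[of X Y Z X' Y' Zm] unfolding Q_def u_def v_def
    by (auto simp: QZ_def)
  have disjGP: "set (GP s1) \<inter> set (GP s2) \<subseteq> {u,v}" if "s1 \<in> S" "s2 \<in> S" "s1 \<noteq> s2" for s1 s2
  proof
    fix w assume a: "w \<in> set (GP s1) \<inter> set (GP s2)"
    show "w \<in> {u,v}"
    proof (rule ccontr)
      assume "w \<notin> {u,v}"
      then have "inn Y Y' Z T \<pi> \<mu> s1 w" "inn Y Y' Z T \<pi> \<mu> s2 w" using a GPok that by blast+
      then show False using inn_disj[OF ne(2) that pi] mu dis by blast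
    qed
  qed
  have disjQ: "set (GP s) \<inter> set Q \<subseteq> {u,v}" if "s \<in> S" for s
  proof
    fix w assume a: "w \<in> set (GP s) \<inter> set Q"
    show "w \<in> {u,v}"
    proof (rule ccontr)
      assume "w \<notin> {u,v}"
      then have "inn Y Y' Z T \<pi> \<mu> s w" "\<exists>x y z L. w = (x,y,z,L) \<and> (L = 0 \<or> z = Zm)"
        using a GPok Qok that by blast+
      then show False using inn_QZ zne by blast
    qed
  qed
  have len: "length ps = 2*r+2" using lsl by (simp add: ps_def)
  have nth_ps: "i < length ps \<Longrightarrow> (i < length sl \<and> ps!i = GP (sl!i)) \<or> (i = length sl \<and> ps!i = Q)" for i
    by (auto simp: ps_def nth_append less_Suc_eq)
  have D: "set (ps!i) \<inter> set (ps!j) \<subseteq> {u,v}" if "i < length ps" "j < length ps" "i \<noteq> j" for i j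
  proof -
    have sli: "i < length sl \<Longrightarrow> sl!i \<in> S" and slj: "j < length sl \<Longrightarrow> sl!j \<in> S" using sl by auto
    have dd: "i < length sl \<Longrightarrow> j < length sl \<Longrightarrow> sl!i \<noteq> sl!j" using sl(2) that(3) nth_eq_iff_index_eq by blast
    from nth_ps[OF that(1)] nth_ps[OF that(2)] show ?thesis
      using disjGP disjQ sli slj dd that(3) by (metis inf_commute)
  qed
  have P: "\<forall>p\<in>set ps. gpath m n k u v p \<and> length p - 1 \<le> m+n+7 \<and> length p \<ge> 3"
    using GPok Qok sl by (auto simp: ps_def)
  show ?thesis using len D P unfolding u_def v_def by blast
qed

definition Nb :: "nat \<Rightarrow> nat list \<Rightarrow> nat list set" where
  "Nb r X = {X[i:=a] | i a. i < r \<and> a < 3 \<and> a \<noteq> X!i}"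

lemma card_3minus: "c < 3 \<Longrightarrow> card {a::nat. a < 3 \<and> a \<noteq> c} = 2"
proof -
  assume c: "c < 3"
  have "{a::nat. a < 3 \<and> a \<noteq> c} = {..<3} - {c}" by auto
  then show ?thesis using c by simp
qed

lemma card_Nb:
  assumes w: "word3 n X" and r: "r \<le> n"
  shows "card (Nb r X) = 2*r"
proof -
  define A where "A = (SIGMA i:{..<r}. {a. a < 3 \<and> a \<noteq> X!i})"
  have e: "Nb r X = (\<lambda>(i,a). X[i:=a]) ` A" unfolding Nb_def A_def by auto
  have l: "length X = n" and lt: "\<forall>i<n. X!i < 3" using w by (auto simp: word3_def)
  have inj: "inj_on (\<lambda>(i,a). X[i:=a]) A"
  proof (rule inj_onI, clarsimp simp: A_def)
    fix i a j b assume h: "X[i:=a] = X[j:=b]" "i < r" "a < 3" "a \<noteq> X!i" "j < r" "b < 3" "b \<noteq> X!j"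
    have il: "i < length X" "j < length X" using h l r by auto
    have e1: "X[i:=a]!i = X[j:=b]!i" using h(1) by simp
    show "i = j \<and> a = b"
    proof (cases "i = j")
      case True then show ?thesis using e1 il by simp
    next
      case False then have "X[j:=b]!i = X!i" by simp
      then show ?thesis using e1 il h(4) by simp
    qed
  qed
  have "card A = (\<Sum>i<r. card {a. a < 3 \<and> a \<noteq> X!i})" unfolding A_def by (simp add: card_SigmaI)
  also have "\<dots> = (\<Sum>i<r. 2)"
  proof (rule sum.cong)
    fix i assume "i \<in> {..<r}"
    then have "X!i < 3" using lt r by auto
    then show "card {a. a < 3 \<and> a \<noteq> X!i} = 2" by (rule card_3minus)
  qed simp
  finally have "card A = 2*r" by simp
  then show ?thesis using e card_image[OF inj] by simp
qed

lemma Nb_mem: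
  assumes "M \<in> Nb r X" "word3 n X" "r \<le> n"
  shows "word3 n M \<and> differ1 X M \<and> M \<noteq> X"
proof -
  obtain i a where h: "M = X[i:=a]" "i < r" "a < 3" "a \<noteq> X!i" using assms(1) unfolding Nb_def by auto
  have l: "length X = n" "i < n" using assms h by (auto simp: word3_def)
  have "word3 n M" using assms(2) h l set_update_subset_insert[of X i a] by (auto simp: word3_def)
  moreover have "differ1 X M" using differ1_upd[of i X a] h l by simp
  ultimately show ?thesis using differ1_neq by blast
qed

lemma Nb_finite: "finite (Nb r X)"
proof -
  have "Nb r X = (\<lambda>(i,a). X[i:=a]) ` (SIGMA i:{..<r}. {a. a < 3 \<and> a \<noteq> X!i})" unfolding Nb_def by auto
  then show ?thesis by simp
qed

lemma Nb_sym:
  assumes "X \<in> Nb r X'" "word3 n X'" "r \<le> n"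
  shows "X' \<in> Nb r X"
proof -
  obtain i a where h: "X = X'[i:=a]" "i < r" "a < 3" "a \<noteq> X'!i" using assms(1) unfolding Nb_def by auto
  have l: "i < length X'" using assms h by (simp add: word3_def)
  have "X' = X[i := X'!i]" using h l by simp
  moreover have "X'!i \<noteq> X!i" "X'!i < 3" using h l assms(2) by (auto simp: word3_def)
  ultimately show ?thesis using h unfolding Nb_def by blast
qed

lemma card_S:
  assumes "word3 n X" "r \<le> n"
  shows "card (insert X (Nb r X)) = 2*r+1" "finite (insert X (Nb r X))"
proof -
  have "X \<notin> Nb r X" using Nb_mem[OF _ assms] by blast
  then show "card (insert X (Nb r X)) = 2*r+1" using card_Nb[OF assms] Nb_finite by simp
  show "finite (insert X (Nb r X))" using Nb_finite by simp
qed

lemma ham_le_set: "length A = length B \<Longrightarrow> {i. i < length A \<and> A!i \<noteq> B!i} \<subseteq> D \<Longrightarrow> finite D \<Longrightarrow> ham A B \<le> card D"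
  unfolding ham_def by (simp add: card_mono)

lemma words_finite: "finite {M. word3 n M}"
proof -
  have "{M. word3 n M} \<subseteq> {xs. set xs \<subseteq> {..<3} \<and> length xs = n}" by (auto simp: word3_def)
  then show ?thesis using finite_lists_length_eq[of "{..<3::nat}" n] finite_subset by blast
qed

lemma word3_upd: "word3 n Y \<Longrightarrow> a < 3 \<Longrightarrow> word3 n (Y[i:=a])"
  using set_update_subset_insert[of Y i a] by (auto simp: word3_def)

lemma mod3_ne: "(x::nat) < 3 \<Longrightarrow> Suc x mod 3 \<noteq> x" by presburger

lemma pool3_card:
  assumes w: "word3 n Y" "word3 n Y'" and n: "2 \<le> n"
  shows "2*n+1 \<le> card {M. word3 n M \<and> M \<noteq> Y \<and> M \<noteq> Y' \<and> ham M Y' \<le> 2}"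
proof -
  define a0 where "a0 = (Y'!0 + 1) mod 3"
  define E2 where "E2 = (\<lambda>b. Y'[0:=a0, 1:=b]) ` {b. b < 3 \<and> b \<noteq> Y'!1}"
  have l: "length Y' = n" and lt: "Y'!0 < 3" "Y'!1 < 3" using w n by (auto simp: word3_def)
  have a0: "a0 \<noteq> Y'!0" "a0 < 3" unfolding a0_def using lt mod3_ne by auto
  have injE: "inj_on (\<lambda>b. Y'[0:=a0, 1:=b]) {b. b < 3 \<and> b \<noteq> Y'!1}"
  proof (rule inj_onI)
    fix b c assume "Y'[0:=a0, 1:=b] = Y'[0:=a0, 1:=c]"
    then have "Y'[0:=a0, 1:=b]!1 = Y'[0:=a0, 1:=c]!1" by simp
    then show "b = c" using l n by simp
  qed
  have cE: "card E2 = 2" unfolding E2_def using card_image[OF injE] card_3minus[OF lt(2)] by simp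
  have disj: "Nb n Y' \<inter> E2 = {}"
  proof (rule ccontr)
    assume "Nb n Y' \<inter> E2 \<noteq> {}"
    then obtain j a b where h: "Y'[j:=a] = Y'[0:=a0, 1:=b]" "j < n" "a \<noteq> Y'!j" "b \<noteq> Y'!1"
      unfolding Nb_def E2_def by blast
    have e0: "Y'[j:=a]!0 = Y'[0:=a0, 1:=b]!0" and e1: "Y'[j:=a]!1 = Y'[0:=a0, 1:=b]!1" using h(1) by auto
    show False
    proof (cases "j = 0")
      case True
      then show False using e1 h l n by simp
    next
      case False
      have "Y'[j:=a]!0 = Y'!0" using False by simp
      moreover have "Y'[0:=a0, 1:=b]!0 = a0" using l n by (simp add: nth_list_update)
      ultimately show False using e0 a0 by simp
    qed
  qed
  have cU: "card (Nb n Y' \<union> E2) = 2*n+2"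
    using card_Un_disjoint[OF Nb_finite _ disj] cE card_Nb[OF w(2) order_refl] unfolding E2_def by simp
  have sub: "(Nb n Y' \<union> E2) - {Y} \<subseteq> {M. word3 n M \<and> M \<noteq> Y \<and> M \<noteq> Y' \<and> ham M Y' \<le> 2}"
  proof
    fix M assume "M \<in> (Nb n Y' \<union> E2) - {Y}"
    then consider "M \<in> Nb n Y'" "M \<noteq> Y" | "M \<in> E2" "M \<noteq> Y" by blast
    then show "M \<in> {M. word3 n M \<and> M \<noteq> Y \<and> M \<noteq> Y' \<and> ham M Y' \<le> 2}"
    proof cases
      case 1
      then have "word3 n M" "differ1 Y' M" "M \<noteq> Y'" using Nb_mem[OF _ w(2) order_refl] by auto
      then show ?thesis using 1 differ1_sym[of Y' M] by (auto simp: differ1_ham)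
    next
      case 2
      then obtain b where b: "M = Y'[0:=a0, 1:=b]" "b < 3" "b \<noteq> Y'!1" unfolding E2_def by auto
      have wM: "word3 n M" using b word3_upd[OF word3_upd[OF w(2) a0(2)]] by simp
      have "M!0 \<noteq> Y'!0" using b l n a0 by simp
      then have "M \<noteq> Y'" by auto
      moreover have "ham M Y' \<le> card {0::nat,1}"
        by (rule ham_le_set) (use b l in \<open>auto simp: nth_list_update split: if_splits\<close>)
      ultimately show ?thesis using wM 2 by simp
    qed
  qed
  have "card ((Nb n Y' \<union> E2) - {Y}) \<ge> 2*n+1"
    using cU card_Diff_singleton_if[of "Nb n Y' \<union> E2" Y] Nb_finite unfolding E2_def by (auto split: if_splits)
  moreover have "finite {M. word3 n M \<and> M \<noteq> Y \<and> M \<noteq> Y' \<and> ham M Y' \<le> 2}"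
    by (rule finite_subset[OF _ words_finite[of n]]) auto
  ultimately show ?thesis using card_mono[OF _ sub] by (meson le_trans)
qed

lemma pool1_card:
  assumes w: "word3 n Y" "word3 n Y'" and ne: "Y \<noteq> Y'" and n: "2 \<le> n"
  shows "2*n \<le> card {M. word3 n M \<and> M \<noteq> Y \<and> M \<noteq> Y' \<and> ham Y M + ham M Y' \<le> n+1}"
    (is "_ \<le> card ?P")
proof -
  have fin: "finite ?P" by (rule finite_subset[OF _ words_finite[of n]]) auto
  have lY: "length Y = n" "length Y' = n" using w by (auto simp: word3_def)
  have NbP: "M \<in> ?P" if "M \<in> Nb n Y'" "M \<noteq> Y" for M
  proof -
    have "word3 n M" "differ1 Y' M" "M \<noteq> Y'" using Nb_mem[OF that(1) w(2) order_refl] by auto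
    moreover have "ham Y M \<le> n" using ham_le[of Y M] lY by simp
    ultimately show ?thesis using that differ1_sym[of Y' M] by (auto simp: differ1_ham)
  qed
  show ?thesis
  proof (cases "Y \<in> Nb n Y'")
    case False
    have sub: "Nb n Y' \<subseteq> ?P"
    proof
      fix M assume M: "M \<in> Nb n Y'"
      then have "M \<noteq> Y" using False by auto
      then show "M \<in> ?P" using NbP[OF M] by simp
    qed
    show ?thesis using card_mono[OF fin sub] card_Nb[OF w(2) order_refl] by simp
  next
    case True
    then obtain j0 c where h: "Y = Y'[j0:=c]" "j0 < n" "c < 3" "c \<noteq> Y'!j0" unfolding Nb_def by blast
    define p where "p = (if j0 = 0 then 1 else 0::nat)"
    have p: "p < n" "p \<noteq> j0" using n unfolding p_def by auto
    define E where "E = Y[p := Suc (Y!p) mod 3]"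
    have Yp: "Y!p = Y'!p" "Y!p < 3" using h p w lY by (auto simp: word3_def)
    have Ej0: "E!j0 = c" using h p lY by (simp add: E_def)
    have Ep: "E!p = Suc (Y'!p) mod 3" "E!p \<noteq> Y'!p" using p lY Yp mod3_ne by (auto simp: E_def)
    have wE: "word3 n E" unfolding E_def by (rule word3_upd[OF w(1)]) simp
    have dYE: "differ1 Y E" unfolding E_def by (rule differ1_upd) (use p lY Yp mod3_ne in auto)
    have EY': "E \<noteq> Y'" using Ej0 h(4) by auto
    have hE: "ham E Y' \<le> card {j0, p}"
    proof (rule ham_le_set)
      show "length E = length Y'" using lY by (simp add: E_def)
      show "{i. i < length E \<and> E ! i \<noteq> Y' ! i} \<subseteq> {j0, p}"
        using h lY p by (auto simp: E_def nth_list_update split: if_splits)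
    qed simp
    have "card {j0,p} = 2" using p by simp
    then have hc: "ham Y E + ham E Y' \<le> n + 1" using hE dYE n by (simp add: differ1_ham)
    have EP: "E \<in> ?P" using wE dYE differ1_neq EY' hc by auto
    have EN: "E \<notin> Nb n Y'"
    proof
      assume "E \<in> Nb n Y'"
      then obtain j a where ja: "E = Y'[j:=a]" "j < n" "a \<noteq> Y'!j" unfolding Nb_def by blast
      have "j = j0"
      proof (rule ccontr)
        assume "j \<noteq> j0" then have "Y'[j:=a]!j0 = Y'!j0" by simp
        then show False using ja(1) Ej0 h(4) by simp
      qed
      moreover have "j = p"
      proof (rule ccontr)
        assume "j \<noteq> p" then have "Y'[j:=a]!p = Y'!p" by simp
        then show False using ja(1) Ep(2) by simp
      qed
      ultimately show False using p by simp
    qed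
    have sub: "insert E (Nb n Y' - {Y}) \<subseteq> ?P" using EP NbP by blast
    have "card (insert E (Nb n Y' - {Y})) = 2*n"
      using EN True card_Nb[OF w(2) order_refl] Nb_finite n by (simp add: card_insert_if)
    then show ?thesis using card_mono[OF fin sub] by simp
  qed
qed

lemma core_ge2:
  assumes w: "word3 m X" "word3 m X'" "word3 n Y" "word3 n Y'" "word3 k Z" "word3 k Zm"
    and ne: "X \<noteq> X'" "Y \<noteq> Y'" and dZ: "differ1 Z Zm"
    and r: "r \<le> m" "r \<le> n" and n: "2 \<le> n"
  shows "\<exists>ps. length ps = 2*r+2 \<and>
     (\<forall>i j. i < length ps \<longrightarrow> j < length ps \<longrightarrow> i \<noteq> j \<longrightarrow> set (ps!i) \<inter> set (ps!j) \<subseteq> {(X,Y,Z,2), (X',Y',Z,2)}) \<and>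
     (\<forall>p\<in>set ps. gpath m n k (X,Y,Z,2) (X',Y',Z,2) p \<and> length p - 1 \<le> m+n+7 \<and> length p \<ge> 3)"
proof -
  define S where "S = insert X (Nb r X)"
  define T where "T = insert X' (Nb r X')"
  have cS: "card S = 2*r+1" "finite S" using card_S[OF w(1) r(1)] unfolding S_def by auto
  have cT: "card T = 2*r+1" "finite T" using card_S[OF w(2) r(1)] unfolding T_def by auto
  have Sp: "\<forall>s\<in>S. word3 m s \<and> (s = X \<or> differ1 X s)" using Nb_mem[OF _ w(1) r(1)] w(1) unfolding S_def by auto
  have Tp: "\<forall>t\<in>T. word3 m t \<and> (t = X' \<or> differ1 t X')" using Nb_mem[OF _ w(2) r(1)] w(2) differ1_sym unfolding T_def by blast
  have lm: "\<forall>s\<in>S. length s = m" "\<forall>t\<in>T. length t = m" using Sp Tp by (auto simp: word3_def)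
  have "card (S - T) = card (T - S)"
    using card_Diff_subset_Int[of S T] card_Diff_subset_Int[of T S] cS cT by (simp add: Int_commute)
  then obtain h where h: "bij_betw h (S - T) (T - S)" using finite_same_card_bij[of "S-T" "T-S"] cS cT by auto
  define \<pi> where "\<pi> x = (if x \<in> T then x else h x)" for x
  have pi1: "\<pi> ` S \<subseteq> T" using h unfolding \<pi>_def bij_betw_def by auto
  have pi2: "inj_on \<pi> S"
  proof (rule inj_onI)
    fix a b assume ab: "a \<in> S" "b \<in> S" "\<pi> a = \<pi> b"
    show "a = b"
    proof (cases "a \<in> T"; cases "b \<in> T")
      assume "a \<in> T" "b \<in> T" then show ?thesis using ab by (simp add: \<pi>_def)
    next
      assume "a \<in> T" "b \<notin> T" then have "h b \<in> T - S" using h ab unfolding bij_betw_def by auto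
      then show ?thesis using ab \<open>a \<in> T\<close> \<open>b \<notin> T\<close> by (simp add: \<pi>_def)
    next
      assume "a \<notin> T" "b \<in> T" then have "h a \<in> T - S" using h ab unfolding bij_betw_def by auto
      then show ?thesis using ab \<open>a \<notin> T\<close> \<open>b \<in> T\<close> by (simp add: \<pi>_def)
    next
      assume "a \<notin> T" "b \<notin> T" then show ?thesis using ab h unfolding bij_betw_def inj_on_def \<pi>_def by auto
    qed
  qed
  have pi3: "\<forall>x\<in>S\<inter>T. \<pi> x = x" by (simp add: \<pi>_def)
  define P1 where "P1 = {M. word3 n M \<and> M \<noteq> Y \<and> M \<noteq> Y' \<and> ham Y M + ham M Y' \<le> n+1}"
  define P3 where "P3 = {M. word3 n M \<and> M \<noteq> Y \<and> M \<noteq> Y' \<and> ham M Y' \<le> 2}"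
  have fP1: "finite P1" unfolding P1_def by (rule finite_subset[OF _ words_finite[of n]]) auto
  have fP3: "finite P3" unfolding P3_def by (rule finite_subset[OF _ words_finite[of n]]) auto
  have cP1: "2*n \<le> card P1" unfolding P1_def by (rule pool1_card[OF w(3,4) ne(2) n])
  have cP3: "2*n+1 \<le> card P3" unfolding P3_def by (rule pool3_card[OF w(3,4) n])
  have XS: "X \<in> S" unfolding S_def by simp
  have cSX: "card (S - {X}) = 2*r" using cS XS by simp
  obtain \<mu>0 where mu0: "\<mu>0 ` (S - {X}) \<subseteq> P1" "inj_on \<mu>0 (S - {X})"
    using card_le_inj[of "S - {X}" P1] cS(2) fP1 cSX cP1 r(2) by auto
  have "card (\<mu>0 ` (S - {X})) \<le> 2*r" using card_image_le[of "S - {X}" \<mu>0] cS(2) cSX by simp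
  then have "card (\<mu>0 ` (S - {X})) < card P3" using cP3 r(2) by simp
  then have "\<not> P3 \<subseteq> \<mu>0 ` (S - {X})" using card_mono[of "\<mu>0 ` (S - {X})" P3] cS(2) by auto
  then obtain q where q: "q \<in> P3" "q \<notin> \<mu>0 ` (S - {X})" by blast
  define \<mu> where "\<mu> = \<mu>0(X := q)"
  have muinj: "inj_on \<mu> S"
  proof (rule inj_onI)
    fix a b assume ab: "a \<in> S" "b \<in> S" "\<mu> a = \<mu> b"
    show "a = b"
    proof (cases "a = X"; cases "b = X")
      assume "a \<noteq> X" "b \<noteq> X" then show ?thesis using ab mu0(2) unfolding \<mu>_def inj_on_def by auto
    next
      assume "a = X" "b \<noteq> X" then show ?thesis using ab q(2) unfolding \<mu>_def by auto
    next
      assume "a \<noteq> X" "b = X" then show ?thesis using ab q(2) unfolding \<mu>_def by (metis DiffI fun_upd_apply image_eqI singletonD)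
    qed simp
  qed
  have mu: "\<forall>s\<in>S-T. word3 n (\<mu> s) \<and> \<mu> s \<noteq> Y \<and> \<mu> s \<noteq> Y'"
    using mu0(1) q(1) unfolding \<mu>_def P1_def P3_def by auto
  have lYn: "length Y = n" using w by (simp add: word3_def)
  have cost: "\<forall>s\<in>S-T. ham Y (\<mu> s) + ham s (\<pi> s) + ham (\<mu> s) Y' + (if s = X then 0 else 1) + (if \<pi> s = X' then 0 else 1) \<le> m + n + 3"
  proof
    fix s assume s: "s \<in> S - T"
    have hs: "ham s (\<pi> s) \<le> m" using ham_le[of s "\<pi> s"] lm s by auto
    show "ham Y (\<mu> s) + ham s (\<pi> s) + ham (\<mu> s) Y' + (if s = X then 0 else 1) + (if \<pi> s = X' then 0 else 1) \<le> m + n + 3"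
    proof (cases "s = X")
      case True
      have "ham Y (\<mu> s) \<le> n" using ham_le[of Y "\<mu> s"] lYn by simp
      moreover have "ham (\<mu> s) Y' \<le> 2" using q(1) True unfolding \<mu>_def P3_def by simp
      ultimately show ?thesis using hs True by (cases "\<pi> s = X'") auto
    next
      case False
      then have "\<mu> s \<in> P1" using mu0(1) s unfolding \<mu>_def by auto
      then have "ham Y (\<mu> s) + ham (\<mu> s) Y' \<le> n + 1" unfolding P1_def by simp
      then show ?thesis using hs False by (cases "\<pi> s = X'") auto
    qed
  qed
  have dis: "\<forall>s1\<in>S-T. \<forall>s2\<in>S-T. s1 \<noteq> s2 \<longrightarrow> \<mu> s1 \<noteq> \<mu> s2 \<or> set (wk s1 (\<pi> s1)) \<inter> set (wk s2 (\<pi> s2)) = {}"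
    using muinj unfolding inj_on_def by blast
  show ?thesis
    by (rule core_abstract[OF w ne dZ cS(2) cS(1) Sp Tp pi1 pi2 pi3 mu cost dis])
qed

lemma S1_form:
  assumes "x \<in> insert X (Nb 1 X)" "word3 m X" "1 \<le> m"
  shows "x = X[0 := x!0] \<and> x!0 < 3"
proof -
  have l: "length X = m" and lt: "X!0 < 3" using assms by (auto simp: word3_def)
  from assms(1) show ?thesis
  proof
    assume "x = X" then show ?thesis using lt by simp
  next
    assume "x \<in> Nb 1 X"
    then obtain a where "x = X[0:=a]" "a < 3" unfolding Nb_def by auto
    then show ?thesis using l assms(3) by simp
  qed
qed

lemma S1_mem:
  assumes "word3 m X" "1 \<le> m" "a < 3"
  shows "X[0:=a] \<in> insert X (Nb 1 X)"
proof (cases "a = X!0")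
  case True then show ?thesis by simp
next
  case False then show ?thesis unfolding Nb_def using assms by blast
qed

lemma core_eq1:
  assumes w: "word3 m X" "word3 m X'" "word3 n Y" "word3 n Y'" "word3 k Z" "word3 k Zm"
    and ne: "X \<noteq> X'" "Y \<noteq> Y'" and dZ: "differ1 Z Zm"
    and r: "r = 1" "1 \<le> m" and n: "n = 1"
  shows "\<exists>ps. length ps = 2*r+2 \<and>
     (\<forall>i j. i < length ps \<longrightarrow> j < length ps \<longrightarrow> i \<noteq> j \<longrightarrow> set (ps!i) \<inter> set (ps!j) \<subseteq> {(X,Y,Z,2), (X',Y',Z,2)}) \<and>
     (\<forall>p\<in>set ps. gpath m n k (X,Y,Z,2) (X',Y',Z,2) p \<and> length p - 1 \<le> m+n+7 \<and> length p \<ge> 3)"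
proof -
  define S where "S = insert X (Nb r X)"
  define T where "T = insert X' (Nb r X')"
  have rm: "r \<le> m" using r by simp
  have cS: "card S = 2*r+1" "finite S" using card_S[OF w(1) rm] unfolding S_def by auto
  have Sp: "\<forall>s\<in>S. word3 m s \<and> (s = X \<or> differ1 X s)" using Nb_mem[OF _ w(1) rm] w(1) unfolding S_def by auto
  have Tp: "\<forall>t\<in>T. word3 m t \<and> (t = X' \<or> differ1 t X')" using Nb_mem[OF _ w(2) rm] w(2) differ1_sym unfolding T_def by blast
  have lm: "\<forall>s\<in>S. length s = m" "\<forall>t\<in>T. length t = m" using Sp Tp by (auto simp: word3_def)
  have SF: "x = X[0 := x!0] \<and> x!0 < 3" if "x \<in> S" for x using S1_form[OF _ w(1) r(2)] that r unfolding S_def by simp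
  have TF: "x = X'[0 := x!0] \<and> x!0 < 3" if "x \<in> T" for x using S1_form[OF _ w(2) r(2)] that r unfolding T_def by simp
  have lX': "length X' = m" using w by (simp add: word3_def)
  define \<pi> where "\<pi> x = X'[0 := x!0]" for x
  have pi0: "\<pi> x ! 0 = x!0" for x using lX' r by (simp add: \<pi>_def)
  have pi1: "\<pi> ` S \<subseteq> T" using SF S1_mem[OF w(2) r(2)] r unfolding \<pi>_def T_def by auto
  have pi2: "inj_on \<pi> S"
  proof (rule inj_onI)
    fix a b assume "a \<in> S" "b \<in> S" "\<pi> a = \<pi> b"
    then have "a!0 = b!0" "a = X[0 := a!0]" "b = X[0 := b!0]" using pi0 SF by metis+
    then show "a = b" by simp
  qed
  have pi3: "\<forall>x\<in>S\<inter>T. \<pi> x = x" using TF unfolding \<pi>_def by auto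
  have lY: "length Y = 1" "length Y' = 1" and yl: "Y!0 < 3" "Y'!0 < 3" using w n by (auto simp: word3_def)
  have Yne: "Y!0 \<noteq> Y'!0"
  proof
    assume "Y!0 = Y'!0"
    then have "Y = Y'" using lY by (intro nth_equalityI) (auto simp: less_Suc_eq)
    then show False using ne by simp
  qed
  define W where "W = [3 - Y!0 - Y'!0]"
  have W0: "3 - Y!0 - Y'!0 < 3" "3 - Y!0 - Y'!0 \<noteq> Y!0" "3 - Y!0 - Y'!0 \<noteq> Y'!0" using yl Yne by arith+
  have wW: "word3 n W" using W0 n by (simp add: W_def word3_def)
  have WY: "W \<noteq> Y" "W \<noteq> Y'" using W0 lY unfolding W_def by (metis nth_Cons_0)+
  define \<mu> where "\<mu> x = W" for x :: "nat list"
  have mu: "\<forall>s\<in>S-T. word3 n (\<mu> s) \<and> \<mu> s \<noteq> Y \<and> \<mu> s \<noteq> Y'" using wW WY by (simp add: \<mu>_def)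
  have cost: "\<forall>s\<in>S-T. ham Y (\<mu> s) + ham s (\<pi> s) + ham (\<mu> s) Y' + (if s = X then 0 else 1) + (if \<pi> s = X' then 0 else 1) \<le> m + n + 3"
  proof
    fix s assume s: "s \<in> S - T"
    have "ham s (\<pi> s) \<le> m" using ham_le[of s "\<pi> s"] lm s by auto
    moreover have "ham Y W \<le> 1" "ham W Y' \<le> 1" using ham_le[of Y W] ham_le[of W Y'] lY by (auto simp: W_def)
    ultimately show "ham Y (\<mu> s) + ham s (\<pi> s) + ham (\<mu> s) Y' + (if s = X then 0 else 1) + (if \<pi> s = X' then 0 else 1) \<le> m + n + 3"
      using n unfolding \<mu>_def by (auto split: if_splits)
  qed
  have dis: "\<forall>s1\<in>S-T. \<forall>s2\<in>S-T. s1 \<noteq> s2 \<longrightarrow> \<mu> s1 \<noteq> \<mu> s2 \<or> set (wk s1 (\<pi> s1)) \<inter> set (wk s2 (\<pi> s2)) = {}"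
  proof (intro ballI impI disjI2)
    fix s1 s2 assume s: "s1 \<in> S - T" "s2 \<in> S - T" "s1 \<noteq> s2"
    have z0: "z!0 = s!0" if "s \<in> S" "z \<in> set (wk s (\<pi> s))" for s z
    proof -
      have ls: "length s = length (\<pi> s)" "0 < length s" using lm that lX' r by (auto simp: \<pi>_def)
      show ?thesis using wk_set[OF ls(1) that(2)] ls(2) pi0 by metis
    qed
    have "s1!0 \<noteq> s2!0" using SF s by (metis DiffD1)
    then show "set (wk s1 (\<pi> s1)) \<inter> set (wk s2 (\<pi> s2)) = {}" using z0 s by (metis DiffD1 disjoint_iff)
  qed
  show ?thesis
    by (rule core_abstract[OF w ne dZ cS(2) cS(1) Sp Tp pi1 pi2 pi3 mu cost dis])
qed

definition CP :: "nat list \<Rightarrow> nat list \<Rightarrow> nat list \<Rightarrow> nat list \<Rightarrow> nat list \<Rightarrow> nat list \<Rightarrow> vtx list" where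
  "CP A B C A' B' c = [(A,B,C,0),(A,B,c,0)] @ map (\<lambda>y. (A,y,c,1)) (wk B B') @
     map (\<lambda>x. (x,B',c,2)) (wk A A') @ [(A',B',c,0),(A',B',C,0)]"

definition Q1 :: "nat list \<Rightarrow> nat list \<Rightarrow> nat list \<Rightarrow> nat list \<Rightarrow> nat list \<Rightarrow> vtx list" where
  "Q1 A B C A' B' = [(A,B,C,0)] @ map (\<lambda>y. (A,y,C,1)) (wk B B') @
     map (\<lambda>x. (x,B',C,2)) (wk A A') @ [(A',B',C,0)]"

definition Q2 :: "nat list \<Rightarrow> nat list \<Rightarrow> nat list \<Rightarrow> nat list \<Rightarrow> nat list \<Rightarrow> vtx list" where
  "Q2 A B C A' B' = [(A,B,C,0)] @ map (\<lambda>x. (x,B,C,2)) (wk A A') @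
     map (\<lambda>y. (A',y,C,1)) (wk B B') @ [(A',B',C,0)]"

lemma CP_path:
  assumes w: "word3 m A" "word3 m A'" "word3 n B" "word3 n B'" "word3 k C" "word3 k c"
    and ne: "A \<noteq> A'" and d: "differ1 C c"
  shows "gpath m n k (A,B,C,0) (A',B',C,0) (CP A B C A' B' c)"
    and "length (CP A B C A' B' c) - 1 \<le> m + n + 5" "length (CP A B C A' B' c) \<ge> 3"
    and "set (CP A B C A' B' c) \<subseteq> {(A,B,C,0), (A',B',C,0)} \<union> {w. \<exists>x y L. w = (x,y,c,L)}"
proof -
  have l: "length B = length B'" "length A = length A'" "length B = n" "length A = m"
    using w by (auto simp: word3_def)
  note wl = wk_last[OF l(1)] wk_last[OF l(2)]
  have zne: "C \<noteq> c" using d differ1_neq by auto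
  have dist: "distinct (CP A B C A' B' c)"
    unfolding CP_def distinct_append
    apply (intro conjI)
    using ne zne by (auto simp: distinct_map wk_distinct inj_on_def)
  have a: "\<forall>y\<in>set (wk B B'). word3 n y" "\<forall>y\<in>set (wk A A'). word3 m y"
    using wk_word3 w by blast+
  have val: "\<forall>w\<in>set (CP A B C A' B' c). gvalid m n k w"
    using w a by (auto simp: CP_def gvalid_def)
  note cc = chain_L1[OF l(1)] chain_L2[OF l(2)]
  have ch: "chain gadj (CP A B C A' B' c)"
    unfolding CP_def chain_append
    using d cc by (simp add: hd_map last_map wl gadj_def differ1_sym)
  show "gpath m n k (A,B,C,0) (A',B',C,0) (CP A B C A' B' c)"
    using dist val ch by (simp add: gpath_def CP_def)
  show "length (CP A B C A' B' c) - 1 \<le> m + n + 5"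
    using l ham_le[of B B'] ham_le[of A A'] by (simp add: CP_def wk_len)
  show "length (CP A B C A' B' c) \<ge> 3" by (simp add: CP_def)
  show "set (CP A B C A' B' c) \<subseteq> {(A,B,C,0), (A',B',C,0)} \<union> {w. \<exists>x y L. w = (x,y,c,L)}"
    by (auto simp: CP_def)
qed

lemma Q1_path:
  assumes w: "word3 m A" "word3 m A'" "word3 n B" "word3 n B'" "word3 k C" and ne: "A \<noteq> A'"
  shows "gpath m n k (A,B,C,0) (A',B',C,0) (Q1 A B C A' B')"
    and "length (Q1 A B C A' B') - 1 \<le> m + n + 5" "length (Q1 A B C A' B') \<ge> 3"
    and "set (Q1 A B C A' B') \<subseteq> {(A,B,C,0), (A',B',C,0)} \<union> {w. \<exists>y. w = (A,y,C,1)} \<union> {w. \<exists>x. w = (x,B',C,2)}"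
proof -
  have l: "length B = length B'" "length A = length A'" "length B = n" "length A = m"
    using w by (auto simp: word3_def)
  note wl = wk_last[OF l(1)] wk_last[OF l(2)]
  have dist: "distinct (Q1 A B C A' B')"
    unfolding Q1_def distinct_append
    apply (intro conjI)
    using ne by (auto simp: distinct_map wk_distinct inj_on_def)
  have a: "\<forall>y\<in>set (wk B B'). word3 n y" "\<forall>y\<in>set (wk A A'). word3 m y"
    using wk_word3 w by blast+
  have val: "\<forall>w\<in>set (Q1 A B C A' B'). gvalid m n k w"
    using w a by (auto simp: Q1_def gvalid_def)
  note cc = chain_L1[OF l(1)] chain_L2[OF l(2)]
  have ch: "chain gadj (Q1 A B C A' B')"
    unfolding Q1_def chain_append
    using cc by (simp add: hd_map last_map wl gadj_def)
  show "gpath m n k (A,B,C,0) (A',B',C,0) (Q1 A B C A' B')"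
    using dist val ch by (simp add: gpath_def Q1_def)
  show "length (Q1 A B C A' B') - 1 \<le> m + n + 5"
    using l ham_le[of B B'] ham_le[of A A'] by (simp add: Q1_def wk_len)
  show "length (Q1 A B C A' B') \<ge> 3"
    using wk_len_pos[of B B'] wk_len_pos[of A A'] unfolding Q1_def length_append length_map list.size by linarith
  show "set (Q1 A B C A' B') \<subseteq> {(A,B,C,0), (A',B',C,0)} \<union> {w. \<exists>y. w = (A,y,C,1)} \<union> {w. \<exists>x. w = (x,B',C,2)}"
    by (auto simp: Q1_def)
qed

lemma Q2_path:
  assumes w: "word3 m A" "word3 m A'" "word3 n B" "word3 n B'" "word3 k C" and ne: "A \<noteq> A'"
  shows "gpath m n k (A,B,C,0) (A',B',C,0) (Q2 A B C A' B')"
    and "length (Q2 A B C A' B') - 1 \<le> m + n + 5" "length (Q2 A B C A' B') \<ge> 3"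
    and "set (Q2 A B C A' B') \<subseteq> {(A,B,C,0), (A',B',C,0)} \<union> {w. \<exists>y. w = (A',y,C,1)} \<union> {w. \<exists>x. w = (x,B,C,2)}"
proof -
  have l: "length B = length B'" "length A = length A'" "length B = n" "length A = m"
    using w by (auto simp: word3_def)
  note wl = wk_last[OF l(1)] wk_last[OF l(2)]
  have dist: "distinct (Q2 A B C A' B')"
    unfolding Q2_def distinct_append
    apply (intro conjI)
    using ne by (auto simp: distinct_map wk_distinct inj_on_def)
  have a: "\<forall>y\<in>set (wk B B'). word3 n y" "\<forall>y\<in>set (wk A A'). word3 m y"
    using wk_word3 w by blast+
  have val: "\<forall>w\<in>set (Q2 A B C A' B'). gvalid m n k w"
    using w a by (auto simp: Q2_def gvalid_def)
  note cc = chain_L1[OF l(1)] chain_L2[OF l(2)]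
  have ch: "chain gadj (Q2 A B C A' B')"
    unfolding Q2_def chain_append
    using cc by (simp add: hd_map last_map wl gadj_def)
  show "gpath m n k (A,B,C,0) (A',B',C,0) (Q2 A B C A' B')"
    using dist val ch by (simp add: gpath_def Q2_def)
  show "length (Q2 A B C A' B') - 1 \<le> m + n + 5"
    using l ham_le[of B B'] ham_le[of A A'] by (simp add: Q2_def wk_len)
  show "length (Q2 A B C A' B') \<ge> 3"
    using wk_len_pos[of B B'] wk_len_pos[of A A'] unfolding Q2_def length_append length_map list.size by linarith
  show "set (Q2 A B C A' B') \<subseteq> {(A,B,C,0), (A',B',C,0)} \<union> {w. \<exists>y. w = (A',y,C,1)} \<union> {w. \<exists>x. w = (x,B,C,2)}"
    by (auto simp: Q2_def)
qed

lemma d0_family: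
  assumes w: "word3 m A" "word3 m A'" "word3 n B" "word3 n B'" "word3 k C"
    and ne: "A \<noteq> A'" "B \<noteq> B'" and rk: "r \<le> k"
  shows "\<exists>ps. length ps = 2*r+2 \<and>
     (\<forall>i j. i < length ps \<longrightarrow> j < length ps \<longrightarrow> i \<noteq> j \<longrightarrow> set (ps!i) \<inter> set (ps!j) \<subseteq> {(A,B,C,0), (A',B',C,0)}) \<and>
     (\<forall>p\<in>set ps. gpath m n k (A,B,C,0) (A',B',C,0) p \<and> length p - 1 \<le> m+n+5 \<and> length p \<ge> 3)"
proof -
  define u where "u = (A,B,C,0::nat)"
  define v where "v = (A',B',C,0::nat)"
  obtain cl where cl: "set cl = Nb r C" "distinct cl" using finite_distinct_list[OF Nb_finite] by blast
  have lcl: "length cl = 2*r" using cl card_Nb[OF w(5) rk] distinct_card by metis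
  have cm: "word3 k c \<and> differ1 C c" if "c \<in> set cl" for c using cl Nb_mem[OF _ w(5) rk] that by auto
  define ps where "ps = map (CP A B C A' B') cl @ [Q1 A B C A' B', Q2 A B C A' B']"
  have CPok: "gpath m n k u v (CP A B C A' B' c) \<and> length (CP A B C A' B' c) - 1 \<le> m+n+5 \<and> length (CP A B C A' B' c) \<ge> 3 \<and>
      set (CP A B C A' B' c) \<subseteq> {u,v} \<union> {w. \<exists>x y L. w = (x,y,c,L)}" if "c \<in> set cl" for c
    using CP_path[OF w cm[OF that, THEN conjunct1] ne(1) cm[OF that, THEN conjunct2]] unfolding u_def v_def by blast
  have Q1ok: "gpath m n k u v (Q1 A B C A' B') \<and> length (Q1 A B C A' B') - 1 \<le> m+n+5 \<and> length (Q1 A B C A' B') \<ge> 3 \<and>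
      set (Q1 A B C A' B') \<subseteq> {u,v} \<union> {w. \<exists>y. w = (A,y,C,1)} \<union> {w. \<exists>x. w = (x,B',C,2)}"
    using Q1_path[OF w ne(1)] unfolding u_def v_def by blast
  have Q2ok: "gpath m n k u v (Q2 A B C A' B') \<and> length (Q2 A B C A' B') - 1 \<le> m+n+5 \<and> length (Q2 A B C A' B') \<ge> 3 \<and>
      set (Q2 A B C A' B') \<subseteq> {u,v} \<union> {w. \<exists>y. w = (A',y,C,1)} \<union> {w. \<exists>x. w = (x,B,C,2)}"
    using Q2_path[OF w ne(1)] unfolding u_def v_def by blast
  have cC: "c \<noteq> C" if "c \<in> set cl" for c using cm[OF that] differ1_neq by blast
  have d1: "set (CP A B C A' B' c1) \<inter> set (CP A B C A' B' c2) \<subseteq> {u,v}" if "c1 \<in> set cl" "c2 \<in> set cl" "c1 \<noteq> c2" for c1 c2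
  proof
    fix w assume a: "w \<in> set (CP A B C A' B' c1) \<inter> set (CP A B C A' B' c2)"
    have "w \<in> {u,v} \<or> (\<exists>x y L. w = (x,y,c1,L))" "w \<in> {u,v} \<or> (\<exists>x y L. w = (x,y,c2,L))"
      using a CPok[OF that(1)] CPok[OF that(2)] by blast+
    then show "w \<in> {u,v}" using that(3) by auto
  qed
  have d2: "set (CP A B C A' B' c) \<inter> set (Q1 A B C A' B') \<subseteq> {u,v}" if "c \<in> set cl" for c
  proof
    fix w assume a: "w \<in> set (CP A B C A' B' c) \<inter> set (Q1 A B C A' B')"
    have "w \<in> {u,v} \<or> (\<exists>x y L. w = (x,y,c,L))" "w \<in> {u,v} \<or> (\<exists>y. w = (A,y,C,1)) \<or> (\<exists>x. w = (x,B',C,2))"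
      using a CPok[OF that] Q1ok by blast+
    then show "w \<in> {u,v}" using cC[OF that] by auto
  qed
  have d3: "set (CP A B C A' B' c) \<inter> set (Q2 A B C A' B') \<subseteq> {u,v}" if "c \<in> set cl" for c
  proof
    fix w assume a: "w \<in> set (CP A B C A' B' c) \<inter> set (Q2 A B C A' B')"
    have "w \<in> {u,v} \<or> (\<exists>x y L. w = (x,y,c,L))" "w \<in> {u,v} \<or> (\<exists>y. w = (A',y,C,1)) \<or> (\<exists>x. w = (x,B,C,2))"
      using a CPok[OF that] Q2ok by blast+
    then show "w \<in> {u,v}" using cC[OF that] by auto
  qed
  have d4: "set (Q1 A B C A' B') \<inter> set (Q2 A B C A' B') \<subseteq> {u,v}"
  proof
    fix w assume a: "w \<in> set (Q1 A B C A' B') \<inter> set (Q2 A B C A' B')"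
    have "w \<in> {u,v} \<or> (\<exists>y. w = (A,y,C,1)) \<or> (\<exists>x. w = (x,B',C,2))" "w \<in> {u,v} \<or> (\<exists>y. w = (A',y,C,1)) \<or> (\<exists>x. w = (x,B,C,2))"
      using a Q1ok Q2ok by blast+
    then show "w \<in> {u,v}" using ne by auto
  qed
  have len: "length ps = 2*r+2" using lcl by (simp add: ps_def)
  have nth_ps: "i < length ps \<Longrightarrow> (i < length cl \<and> ps!i = CP A B C A' B' (cl!i)) \<or>
      (i = length cl \<and> ps!i = Q1 A B C A' B') \<or> (i = Suc (length cl) \<and> ps!i = Q2 A B C A' B')" for i
    by (auto simp: ps_def nth_append less_Suc_eq nth_Cons split: nat.splits)
  have D: "set (ps!i) \<inter> set (ps!j) \<subseteq> {u,v}" if "i < length ps" "j < length ps" "i \<noteq> j" for i j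
  proof -
    have sli: "i < length cl \<Longrightarrow> cl!i \<in> set cl" and slj: "j < length cl \<Longrightarrow> cl!j \<in> set cl" by auto
    have dd: "i < length cl \<Longrightarrow> j < length cl \<Longrightarrow> cl!i \<noteq> cl!j" using cl(2) that(3) nth_eq_iff_index_eq by blast
    from nth_ps[OF that(1)] nth_ps[OF that(2)] show ?thesis
      using d1 d2 d3 d4 sli slj dd that(3) by (metis inf_commute)
  qed
  have P: "\<forall>p\<in>set ps. gpath m n k u v p \<and> length p - 1 \<le> m+n+5 \<and> length p \<ge> 3"
    using CPok Q1ok Q2ok by (auto simp: ps_def)
  show ?thesis using len D P unfolding u_def v_def by blast
qed

lemma transfer_all:
  assumes sw: "if sw then m = s \<and> n = r else m = r \<and> n = s"
    and ex: "\<exists>ps. length ps = N \<and> (\<forall>i j. i < length ps \<longrightarrow> j < length ps \<longrightarrow> i \<noteq> j \<longrightarrow> set (ps!i) \<inter> set (ps!j) \<subseteq> {u,v}) \<and>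
        (\<forall>p\<in>set ps. gpath m n t u v p \<and> length p - 1 \<le> L \<and> length p \<ge> 3)"
  shows "\<exists>ps. length ps = N \<and> internally_disjoint (gv sw u) (gv sw v) ps \<and>
        (\<forall>p\<in>set ps. e3c_path r s t (gv sw u) (gv sw v) p \<and> length p - 1 \<le> L)"
proof -
  obtain ps where ps: "length ps = N" "\<forall>i j. i < length ps \<longrightarrow> j < length ps \<longrightarrow> i \<noteq> j \<longrightarrow> set (ps!i) \<inter> set (ps!j) \<subseteq> {u,v}"
     "\<forall>p\<in>set ps. gpath m n t u v p \<and> length p - 1 \<le> L \<and> length p \<ge> 3" using ex by blast
  define g where "g = gv sw"
  have ig: "inj g" unfolding g_def by (rule gv_inj)
  define qs where "qs = map (map g) ps"
  have inter: "set (qs!i) \<inter> set (qs!j) \<subseteq> {g u, g v}" if "i < length qs" "j < length qs" "i \<noteq> j" for i j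
  proof -
    have "set (qs!i) \<inter> set (qs!j) = g ` (set (ps!i) \<inter> set (ps!j))"
      using that ig by (simp add: qs_def image_Int)
    also have "\<dots> \<subseteq> g ` {u,v}" using ps(2) that by (intro image_mono) (simp add: qs_def)
    finally show ?thesis by simp
  qed
  have dist: "distinct qs"
  proof (subst distinct_conv_nth, intro allI impI)
    fix i j assume h: "i < length qs" "j < length qs" "i \<noteq> j"
    show "qs!i \<noteq> qs!j"
    proof
      assume e: "qs!i = qs!j"
      then have "map g (ps!i) = map g (ps!j)" using h by (simp add: qs_def)
      then have "ps!i = ps!j" using ig by (simp add: inj_map_eq_map)
      note eq = this
      have li: "i < length ps" "j < length ps" using h by (simp_all add: qs_def)
      have "set (ps!i) \<inter> set (ps!j) \<subseteq> {u,v}" using ps(2) li h(3) by blast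
      then have sub: "set (ps!i) \<subseteq> {u,v}" using eq by simp
      have "ps!i \<in> set ps" using h by (simp add: qs_def)
      then have "gpath m n t u v (ps!i)" "length (ps!i) \<ge> 3" using ps(3) by auto
      then obtain w where "w \<in> set (ps!i)" "w \<notin> {u,v}" using path_len3 by blast
      then show False using sub by blast
    qed
  qed
  have P: "\<forall>p\<in>set qs. e3c_path r s t (g u) (g v) p \<and> length p - 1 \<le> L"
    using ps(3) gpath_transfer[OF sw] unfolding qs_def g_def by auto
  have l: "length qs = N" using ps(1) by (simp add: qs_def)
  have "internally_disjoint (g u) (g v) qs" unfolding internally_disjoint_def using dist inter by blast
  then show ?thesis using P l unfolding g_def by blast
qed

lemma core:
  assumes w: "word3 m X" "word3 m X'" "word3 n Y" "word3 n Y'" "word3 k Z"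
    and ne: "X \<noteq> X'" "Y \<noteq> Y'" and r: "1 \<le> r" "r \<le> m" "r \<le> n" and k: "1 \<le> k"
  shows "\<exists>ps. length ps = 2*r+2 \<and>
     (\<forall>i j. i < length ps \<longrightarrow> j < length ps \<longrightarrow> i \<noteq> j \<longrightarrow> set (ps!i) \<inter> set (ps!j) \<subseteq> {(X,Y,Z,2), (X',Y',Z,2)}) \<and>
     (\<forall>p\<in>set ps. gpath m n k (X,Y,Z,2) (X',Y',Z,2) p \<and> length p - 1 \<le> m+n+7 \<and> length p \<ge> 3)"
proof -
  define Zm where "Zm = Z[0 := Suc (Z!0) mod 3]"
  have lZ: "length Z = k" "Z!0 < 3" using w(5) k by (auto simp: word3_def)
  have wZ: "word3 k Zm" unfolding Zm_def by (rule word3_upd[OF w(5)]) simp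
  have dZ: "differ1 Z Zm" unfolding Zm_def by (rule differ1_upd) (use lZ k mod3_ne in auto)
  show ?thesis
  proof (cases "2 \<le> n")
    case True
    show ?thesis by (rule core_ge2[OF w wZ ne dZ r(2,3) True])
  next
    case False
    then have "n = 1" "r = 1" using r by auto
    moreover have "1 \<le> m" using r by simp
    ultimately show ?thesis using core_eq1[OF w wZ ne dZ] by blast
  qed
qed

lemma gv_False: "gv False w = w" by (cases w) (simp add: gv_def)
lemma gv_True: "gv True (x,y,z,L) = (y,x,z,swL L)" by (simp add: gv_def)

theorem lemma12:
  fixes r s t :: nat and A B C A' B' C' :: "nat list" and d d' :: nat
  assumes "1 \<le> r" and "r \<le> s" and "s \<le> t"
    and "e3c_vert r s t (A, B, C, d)" and "e3c_vert r s t (A', B', C', d')"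
    and "A \<noteq> A'" and "B \<noteq> B'" and "C = C'" and "d = d'"
  shows "\<exists>ps. length ps = 2 * r + 2 \<and>
           internally_disjoint (A, B, C, d) (A', B', C', d') ps \<and>
           (\<forall>p\<in>set ps. e3c_path r s t (A, B, C, d) (A', B', C', d') p \<and>
              (d = 0 \<longrightarrow> length p - 1 \<le> r + s + 5) \<and>
              (d \<in> {1, 2} \<longrightarrow> length p - 1 \<le> r + s + 7))"
proof -
  have w: "word3 r A" "word3 s B" "word3 t C" "d < 3" "word3 r A'" "word3 s B'"
    using assms(4,5) by (auto simp: e3c_vert_def)
  note eqs = assms(8,9)[symmetric]
  have rs: "r \<le> s" "r \<le> t" "1 \<le> t" using assms(1-3) by auto
  consider "d = 0" | "d = 1" | "d = 2" using w(4) by arith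
  then show ?thesis
  proof cases
    case 1
    have ex: "\<exists>ps. length ps = 2*r+2 \<and> internally_disjoint (gv False (A,B,C,0)) (gv False (A',B',C,0)) ps \<and>
        (\<forall>p\<in>set ps. e3c_path r s t (gv False (A,B,C,0)) (gv False (A',B',C,0)) p \<and> length p - 1 \<le> r+s+5)"
      by (rule transfer_all) (use d0_family[OF w(1,5,2,6,3) assms(6,7) rs(2)] in auto)
    then show ?thesis using 1 eqs unfolding gv_False by auto
  next
    case 2
    have ex: "\<exists>ps. length ps = 2*r+2 \<and> internally_disjoint (gv True (B,A,C,2)) (gv True (B',A',C,2)) ps \<and>
        (\<forall>p\<in>set ps. e3c_path r s t (gv True (B,A,C,2)) (gv True (B',A',C,2)) p \<and> length p - 1 \<le> s+r+7)"
      by (rule transfer_all) (use core[OF w(2,6,1,5,3) assms(7,6) assms(1) rs(1) order_refl rs(3)] in auto)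
    then show ?thesis using 2 eqs unfolding gv_True by (auto simp: swL_def add.commute)
  next
    case 3
    have ex: "\<exists>ps. length ps = 2*r+2 \<and> internally_disjoint (gv False (A,B,C,2)) (gv False (A',B',C,2)) ps \<and>
        (\<forall>p\<in>set ps. e3c_path r s t (gv False (A,B,C,2)) (gv False (A',B',C,2)) p \<and> length p - 1 \<le> r+s+7)"
      by (rule transfer_all) (use core[OF w(1,5,2,6,3) assms(6,7) assms(1) order_refl rs(1) rs(3)] in auto)
    then show ?thesis using 3 eqs unfolding gv_False by auto
  qed
qed

end
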